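(* There exist a constant $C>0$, a deterministic leader election algorithm with advice $\mathcal{A}$, and a map $G\mapsto \mathrm{Adv}(G)$ assigning a binary string to each feasible graph, such that for every feasible $n$-node graph $G$ with election index $\phi$: (1) the length of $\mathrm{Adv}(G)$ is at most $C\, n\log n$; and (2) when all nodes of $G$ receive $\mathrm{Adv}(G)$ as advice, $\mathcal{A}$ performs leader election in $G$ in time $\phi$.
   Context: A graph is a simple undirected connected finite graph with $n\ge 3$ nodes, which have no identifiers; at each node $v$ of degree $d$ the incident edges carry distinct port numbers $0,\dots,d-1$ (local to each node). The truncated view $\mathcal{V}^0(v)$ is a single node; $\mathcal{V}^{l+1}(v)$ is the port-labelled rooted tree whose root has, for every neighbour $v_i$ of $v$, a child $x_i$ joined by an edge carrying the same two port numbers as $\{v,v_i\}$ (the one at $v$ at the root side), and $x_i$ is the root of a copy of $\mathcal{V}^l(v_i)$. The augmented truncated view $\mathcal{B}^l(v)$ is $\mathcal{V}^l(v)$ with each leaf labelled by the degree in $G$ of the node it represents. A graph is feasible if for some $l$ the views $\mathcal{B}^l(v)$ of all nodes are pairwise distinct; its election index $\phi$ is the smallest such $l$ (equivalently, the minimum time of leader election when nodes know the port-labelled map of the graph). Model (LOCAL): synchronous rounds, all nodes start simultaneously, in each round every node exchanges arbitrary messages with all neighbours and computes arbitrarily. Leader election: every node $v$ outputs a sequence $(p_1,q_1,\dots,p_k,q_k)$ of nonnegative integers describing a simple path starting at $v$ whose $i$-th edge has port $p_i$ at its endpoint closer to $v$ and $q_i$ at the other endpoint; all these paths must end at a common node (the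 leader). Time is the number of rounds until all nodes output. Advice: before the start, an oracle knowing the entire port-labelled graph gives the same binary string (the advice) to all nodes; its length is the size of advice. A deterministic algorithm with advice: the actions/output of node $v$ in round $r$ are a function of the advice and of $\mathcal{B}^r(v)$. Logarithms are base 2. *)

theory Defs
  imports Complex_Main
begin

text \<open>A port-labelled graph on nodes 0..<pn G. Node v has degree pdeg G v, and
  pnb G v p is the neighbour reached from v through port p (p < pdeg G v).
  Node names are only used by the oracle; algorithms see only views.\<close>
record pgraph =
  pn  :: nat
  pdeg :: "nat \<Rightarrow> nat"
  pnb :: "nat \<Rightarrow> nat \<Rightarrow> nat"

definition rport :: "pgraph \<Rightarrow> nat \<Rightarrow> nat \<Rightarrow> nat" where
  "rport G v p = (THE q. q < pdeg G (pnb G v p) \<and> pnb G (pnb G v p) q = v)"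

definition edge_rel :: "pgraph \<Rightarrow> (nat \<times> nat) set" where
  "edge_rel G = {(v, pnb G v p) | v p. v < pn G \<and> p < pdeg G v}"

definition valid_graph :: "pgraph \<Rightarrow> bool" where
  "valid_graph G \<longleftrightarrow>
     pn G \<ge> 3 \<and>
     (\<forall>v < pn G. \<forall>p < pdeg G v.
        pnb G v p < pn G \<and> pnb G v p \<noteq> v \<and>
        (\<exists>q < pdeg G (pnb G v p). pnb G (pnb G v p) q = v)) \<and>
     (\<forall>v < pn G. inj_on (pnb G v) {..<pdeg G v}) \<and>
     (\<forall>u < pn G. \<forall>v < pn G. (u, v) \<in> (edge_rel G)\<^sup>*)"

text \<open>A leaf carries the degree (in G) of the node it
  represents; an inner node carries, ordered by the port at its own side, the list
  of its children together with the two port numbers of the connecting edge.\<close>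
datatype vtree = VLeaf nat | VNode "(nat \<times> nat \<times> vtree) list"

fun aview :: "pgraph \<Rightarrow> nat \<Rightarrow> nat \<Rightarrow> vtree" where
  "aview G 0 v = VLeaf (pdeg G v)"
| "aview G (Suc l) v =
     VNode (map (\<lambda>p. (p, rport G v p, aview G l (pnb G v p))) [0..<pdeg G v])"

definition feasible :: "pgraph \<Rightarrow> bool" where
  "feasible G \<longleftrightarrow> (\<exists>l. inj_on (aview G l) {..<pn G})"

definition election_index :: "pgraph \<Rightarrow> nat" where
  "election_index G = (LEAST l. inj_on (aview G l) {..<pn G})"

fun follow :: "pgraph \<Rightarrow> nat \<Rightarrow> nat list \<Rightarrow> nat list option" where
  "follow G v [] = Some [v]"
| "follow G v [p] = None"
| "follow G v (p # q # rest) =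
     (if p < pdeg G v \<and> rport G v p = q
      then map_option (Cons v) (follow G (pnb G v p) rest) else None)"

text \<open>A deterministic algorithm with advice: in round r, node v outputs
  A adv (B^r(v)) if this is Some, and None means "no output yet".
  The output of v is given at the first round where the value is Some.\<close>
type_synonym algorithm = "bool list \<Rightarrow> vtree \<Rightarrow> nat list option"

definition elects_in_time :: "algorithm \<Rightarrow> bool list \<Rightarrow> pgraph \<Rightarrow> nat \<Rightarrow> bool" where
  "elects_in_time A adv G t \<longleftrightarrow>
     (\<exists>ldr < pn G. \<forall>v < pn G. \<exists>r \<le> t.
        A adv (aview G r v) \<noteq> None \<and>
        (\<forall>r' < r. A adv (aview G r' v) = None) \<and>
        (\<exists>xs. follow G v (the (A adv (aview G r v))) = Some xs \<and>
              distinct xs \<and> last xs = ldr))"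

end

theory Submission
  imports Defs
begin


definition step6 :: "(nat \<times> nat) list \<Rightarrow> nat \<Rightarrow> nat list \<Rightarrow> nat" where
 "step6 sg c e = (if e!0 = c \<and> ((e!1 < length sg \<and> sg!(e!1) = (e!2, e!3)) = (e!4 = 1)) then e!5 else c)"

definition run6 :: "nat list list \<Rightarrow> nat \<Rightarrow> (nat \<times> nat) list \<Rightarrow> nat" where
 "run6 es c sg = foldl (step6 sg) c es"

lemma run6_Nil[simp]: "run6 [] c sg = c" by (simp add: run6_def)
lemma run6_Cons[simp]: "run6 (e#es) c sg = run6 es (step6 sg c e) sg" by (simp add: run6_def)

lemma list_distinguish:
  assumes "xs \<noteq> (ys :: 'a list)"
  shows "\<exists>p a. (p < length xs \<and> xs!p = a) \<noteq> (p < length ys \<and> ys!p = a) \<and>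
               ((p < length xs \<and> xs!p = a) \<or> (p < length ys \<and> ys!p = a))"
proof (cases "length xs = length ys")
  case True
  then obtain i where "i < length xs" "xs!i \<noteq> ys!i" using assms list_eq_iff_nth_eq by blast
  then show ?thesis by (intro exI[of _ i] exI[of _ "xs!i"]) auto
next
  case False
  show ?thesis
  proof (cases "length xs < length ys")
    case True
    then show ?thesis by (intro exI[of _ "length xs"] exI[of _ "ys!length xs"]) auto
  next
    case False
    with \<open>length xs \<noteq> length ys\<close> have "length ys < length xs" by simp
    then show ?thesis by (intro exI[of _ "length ys"] exI[of _ "xs!length ys"]) auto
  qed
qed

lemma split_main:
  fixes V :: "nat set" and s :: "nat \<Rightarrow> (nat\<times>nat) list" and B :: nat
  assumes fin: "finite V" and VB: "V \<subseteq> {..<B}" and B2: "2 \<le> B"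
    and sB: "\<forall>v\<in>V. length (s v) \<le> B \<and> (\<forall>x\<in>set (s v). fst x < B \<and> snd x < B)"
  defines "F \<equiv> (\<lambda>v. Min {u\<in>V. s u = s v}) ` V"
  shows "card (F - cur ` V) = m \<Longrightarrow> (\<forall>v\<in>V. cur v = Min {u\<in>V. cur u = cur v}) \<Longrightarrow>
     (\<forall>u\<in>V. \<forall>v\<in>V. s u = s v \<longrightarrow> cur u = cur v) \<Longrightarrow>
   \<exists>es. (\<forall>e\<in>set es. length e = 6 \<and> (\<forall>x\<in>set e. x < B)) \<and>
        (\<forall>v\<in>V. run6 es (cur v) (s v) = Min {u\<in>V. s u = s v}) \<and>
        distinct (map (\<lambda>e. e!5) es) \<and> set (map (\<lambda>e. e!5) es) \<inter> cur ` V = {} \<and>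
        set (map (\<lambda>e. e!5) es) \<subseteq> F"
proof (induction m arbitrary: cur rule: less_induct)
  case (less m cur)
  note I1 = less.prems(2) and I2 = less.prems(3)
  have curV: "cur v \<in> V \<and> cur (cur v) = cur v \<and> (\<forall>u\<in>V. cur u = cur v \<longrightarrow> cur v \<le> u)"
    if "v \<in> V" for v
  proof -
    let ?S = "{u\<in>V. cur u = cur v}"
    have "finite ?S" using fin by simp
    moreover have "v \<in> ?S" using that by simp
    ultimately have "Min ?S \<in> ?S" "\<forall>u\<in>?S. Min ?S \<le> u" using Min_in Min_le by blast+
    then show ?thesis using I1 that by (metis (mono_tags, lifting) mem_Collect_eq)
  qed
  have curF: "cur v \<in> F" if "v \<in> V" for v
  proof -
    have "Min {u\<in>V. s u = s (cur v)} = cur v"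
    proof (rule Min_eqI)
      show "finite {u\<in>V. s u = s (cur v)}" using fin by simp
      show "cur v \<in> {u\<in>V. s u = s (cur v)}" using curV[OF that] by simp
      fix y assume "y \<in> {u\<in>V. s u = s (cur v)}"
      then have yV: "y \<in> V" and sy: "s y = s (cur v)" by simp_all
      have "cur y = cur (cur v)" using I2 yV sy curV[OF that] by blast
      then show "cur v \<le> y" using curV[OF that] yV by simp
    qed
    note mc = this
    show ?thesis unfolding F_def
      apply (rule rev_image_eqI[of "cur v"]) using curV[OF that] mc by simp_all
  qed
  show ?case
  proof (cases "\<forall>u\<in>V. \<forall>v\<in>V. cur u = cur v \<longrightarrow> s u = s v")
    case True
    have "run6 [] (cur v) (s v) = Min {u\<in>V. s u = s v}" if "v \<in> V" for v
    proof -
      have "{u\<in>V. s u = s v} = {u\<in>V. cur u = cur v}" using True I2 that by blast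
      then show ?thesis using I1 that by simp
    qed
    then show ?thesis by (intro exI[of _ "[]"]) auto
  next
    case False
    then obtain x y where xy: "x \<in> V" "y \<in> V" "cur x = cur y" "s x \<noteq> s y" by blast
    obtain p ab where pab: "(p < length (s x) \<and> s x!p = ab) \<noteq> (p < length (s y) \<and> s y!p = ab)"
      "(p < length (s x) \<and> s x!p = ab) \<or> (p < length (s y) \<and> s y!p = ab)"
      using list_distinguish[OF xy(4)] by blast
    obtain a b where ab: "ab = (a,b)" by (cases ab)
    define tst where "tst u = (p < length (s u) \<and> s u ! p = (a,b))" for u
    define c where "c = cur x"
    define bb where "bb = (\<not> tst c)"
    define Oth where "Oth = {u\<in>V. cur u = c \<and> tst u = bb}"
    define u0 where "u0 = Min Oth"
    have cV: "c \<in> V" "cur c = c" using curV[OF xy(1)] c_def by auto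
    have "x \<in> Oth \<or> y \<in> Oth" using pab(1) xy unfolding Oth_def tst_def c_def bb_def ab by auto
    hence Oth_ne: "Oth \<noteq> {}" by auto
    have Oth_fin: "finite Oth" using fin Oth_def by simp
    have u0O: "u0 \<in> Oth" using Min_in[OF Oth_fin Oth_ne] u0_def by simp
    have u0le: "\<forall>u\<in>Oth. u0 \<le> u" using Min_le[OF Oth_fin] u0_def by simp
    have cnO: "c \<notin> Oth" using bb_def Oth_def by simp
    have u0V: "u0 \<in> V" "cur u0 = c" "tst u0 = bb" using u0O Oth_def by auto
    have u0nc: "u0 \<noteq> c" using u0O cnO by auto
    have u0ncur: "u0 \<notin> cur ` V"
    proof
      assume "u0 \<in> cur ` V"
      then obtain z where "z \<in> V" "u0 = cur z" by auto
      then have "cur u0 = u0" using curV by auto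
      then show False using u0V u0nc by simp
    qed
    have u0F: "u0 \<in> F"
    proof -
      have "Min {u\<in>V. s u = s u0} = u0"
      proof (rule Min_eqI)
        show "finite {u\<in>V. s u = s u0}" using fin by simp
        show "u0 \<in> {u\<in>V. s u = s u0}" using u0V by simp
        fix z assume "z \<in> {u\<in>V. s u = s u0}"
        then have zV: "z \<in> V" and sz: "s z = s u0" by simp_all
        have "cur z = cur u0" using I2 zV u0V(1) sz by blast
        moreover have "tst z = tst u0" using sz tst_def by simp
        ultimately have "z \<in> Oth" using zV u0V unfolding Oth_def by simp
        then show "u0 \<le> z" using u0le by simp
      qed
      note mc = this
      show ?thesis unfolding F_def
        apply (rule rev_image_eqI[of "u0"]) using u0V mc by simp_all
    qed
    define cur' where "cur' u = (if u \<in> Oth then u0 else cur u)" for u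
    have I1': "\<forall>v\<in>V. cur' v = Min {u\<in>V. cur' u = cur' v}"
    proof
      fix v assume vV: "v \<in> V"
      show "cur' v = Min {u\<in>V. cur' u = cur' v}"
      proof (cases "v \<in> Oth")
        case True
        have "{u\<in>V. cur' u = cur' v} = Oth"
          using True u0ncur unfolding cur'_def by (auto simp: Oth_def)
        then show ?thesis using True cur'_def u0_def by simp
      next
        case False
        have cvnO: "cur v \<notin> Oth"
        proof
          assume "cur v \<in> Oth"
          then have "cur (cur v) = c" using Oth_def by simp
          then have "cur v = c" using curV[OF vV] by simp
          then show False using cnO \<open>cur v \<in> Oth\<close> by simp
        qed
        have "Min {u\<in>V. cur' u = cur' v} = cur v"
        proof (rule Min_eqI)
          show "finite {u\<in>V. cur' u = cur' v}" using fin by simp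
          show "cur v \<in> {u\<in>V. cur' u = cur' v}" using curV[OF vV] cvnO False cur'_def by simp
          fix z assume z: "z \<in> {u\<in>V. cur' u = cur' v}"
          have "z \<notin> Oth"
          proof
            assume "z \<in> Oth"
            then have "cur v = u0" using z False cur'_def by simp
            then show False using u0ncur vV by auto
          qed
          then show "cur v \<le> z" using z False cur'_def curV[OF vV] by auto
        qed
        then show ?thesis using False cur'_def by simp
      qed
    qed
    have I2': "\<forall>u\<in>V. \<forall>v\<in>V. s u = s v \<longrightarrow> cur' u = cur' v"
    proof (intro ballI impI)
      fix u v assume "u \<in> V" "v \<in> V" "s u = s v"
      then have "cur u = cur v" using I2 by blast
      have "tst u = tst v" using \<open>s u = s v\<close> tst_def by simp
      then have "u \<in> Oth \<longleftrightarrow> v \<in> Oth" using \<open>cur u = cur v\<close> \<open>u \<in> V\<close> \<open>v \<in> V\<close> Oth_def by auto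
      then show "cur' u = cur' v" using \<open>cur u = cur v\<close> cur'_def by simp
    qed
    have u0cur': "u0 \<in> cur' ` V"
      apply (rule rev_image_eqI[of "u0"]) using u0O u0V cur'_def by simp_all
    have curcur': "cur ` V \<subseteq> cur' ` V"
    proof
      fix f assume "f \<in> cur ` V"
      then obtain z where z: "z \<in> V" "f = cur z" by auto
      show "f \<in> cur' ` V"
      proof (cases "z \<in> Oth")
        case True
        then have "f = c" using z Oth_def by simp
        then have "f = cur' c" using cV cnO cur'_def by simp
        then show ?thesis using cV by auto
      next
        case False
        show ?thesis apply (rule rev_image_eqI[of "z"]) using z False cur'_def by simp_all
      qed
    qed
    have sub: "F - cur' ` V \<subseteq> (F - cur ` V) - {u0}" using curcur' u0cur' by auto
    have "finite F" using fin F_def by simp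
    have fin2: "finite (F - cur ` V)" using \<open>finite F\<close> by simp
    have u0in: "u0 \<in> F - cur ` V" using u0F u0ncur by simp
    have "card (F - cur' ` V) \<le> card ((F - cur ` V) - {u0})"
      using card_mono[OF _ sub] fin2 by simp
    also have "\<dots> < card (F - cur ` V)" using card_Diff1_less[OF fin2 u0in] .
    finally have lt: "card (F - cur' ` V) < m" using less.prems(1) by simp
    obtain es' where es': "\<forall>e\<in>set es'. length e = 6 \<and> (\<forall>x\<in>set e. x < B)"
        "\<forall>v\<in>V. run6 es' (cur' v) (s v) = Min {u\<in>V. s u = s v}"
        "distinct (map (\<lambda>e. e!5) es')" "set (map (\<lambda>e. e!5) es') \<inter> cur' ` V = {}"
        "set (map (\<lambda>e. e!5) es') \<subseteq> F"
      using less.IH[OF lt refl I1' I2'] by blast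
    define e where "e = [c, p, a, b, (if bb then 1 else 0), u0]"
    have step: "step6 (s v) (cur v) e = cur' v" if "v \<in> V" for v
      unfolding step6_def e_def cur'_def Oth_def tst_def using that by auto
    have pB: "p < B \<and> a < B \<and> b < B"
    proof -
      have "\<exists>z\<in>V. p < length (s z) \<and> s z ! p = (a,b)" using pab(2) xy ab by auto
      then obtain z where z: "z \<in> V" "p < length (s z)" "s z ! p = (a,b)" by blast
      then have "(a,b) \<in> set (s z)" by (metis nth_mem)
      then show ?thesis using sB z by fastforce
    qed
    have eB: "length e = 6 \<and> (\<forall>x\<in>set e. x < B)"
      using pB cV u0V VB B2 unfolding e_def by auto
    show ?thesis
    proof (intro exI[of _ "e # es'"] conjI)
      show "\<forall>ea\<in>set (e # es'). length ea = 6 \<and> (\<forall>x\<in>set ea. x < B)" using eB es'(1) by auto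
      show "\<forall>v\<in>V. run6 (e # es') (cur v) (s v) = Min {u \<in> V. s u = s v}" using step es'(2) by simp
      show "distinct (map (\<lambda>e. e ! 5) (e # es'))" using es'(3,4) u0cur' by (auto simp: e_def)
      have A: "set (map (\<lambda>e. e!5) es') \<inter> cur ` V = {}" using es'(4) curcur' by blast
      show "set (map (\<lambda>e. e ! 5) (e # es')) \<inter> cur ` V = {}" using A u0ncur by (simp add: e_def)
      show "set (map (\<lambda>e. e ! 5) (e # es')) \<subseteq> F" using es'(5) u0F by (auto simp: e_def)
    qed
  qed
qed


definition cm :: "pgraph \<Rightarrow> nat \<Rightarrow> nat \<Rightarrow> nat" where
  "cm G l v = Min {u\<in>{..<pn G}. aview G l u = aview G l v}"

definition sigl :: "pgraph \<Rightarrow> nat \<Rightarrow> nat \<Rightarrow> (nat \<times> nat) list" where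
  "sigl G l v = map (\<lambda>p. (rport G v p, cm G l (pnb G v p))) [0..<pdeg G v]"

definition sig0 :: "pgraph \<Rightarrow> nat \<Rightarrow> (nat \<times> nat) list" where
  "sig0 G v = [(pdeg G v, 0)]"

lemma map_upt_eq: "map f [0..<a] = map g [0..<b] \<longleftrightarrow> a = b \<and> (\<forall>p<a. f p = g p)"
proof
  assume h: "map f [0..<a] = map g [0..<b]"
  then have ab: "a = b" by (metis length_map length_upt minus_nat.diff_0)
  have "\<forall>p<a. f p = g p"
  proof (intro allI impI)
    fix p assume "p < a"
    then have "map f [0..<a] ! p = map g [0..<b] ! p" using h by simp
    then show "f p = g p" using \<open>p < a\<close> ab by simp
  qed
  then show "a = b \<and> (\<forall>p<a. f p = g p)" using ab by simp
next
  assume "a = b \<and> (\<forall>p<a. f p = g p)"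
  then show "map f [0..<a] = map g [0..<b]" by (intro map_cong) auto
qed

lemma aview_Suc_eq: "aview G (Suc l) u = aview G (Suc l) v \<longleftrightarrow>
   pdeg G u = pdeg G v \<and> (\<forall>p<pdeg G u. rport G u p = rport G v p \<and> aview G l (pnb G u p) = aview G l (pnb G v p))"
  by (simp add: map_upt_eq)

lemma aview_down: "aview G (Suc l) u = aview G (Suc l) v \<Longrightarrow> aview G l u = aview G l v"
proof (induction l arbitrary: u v)
  case 0
  from "0.prems" have "pdeg G u = pdeg G v" unfolding aview_Suc_eq by blast
  then show ?case by simp
next
  case (Suc l)
  then show ?case unfolding aview_Suc_eq[of G "Suc l"] aview_Suc_eq[of G l] by blast
qed

lemma aview_down_le: "k \<le> l \<Longrightarrow> aview G l u = aview G l v \<Longrightarrow> aview G k u = aview G k v"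
proof (induction l)
  case 0 then show ?case by simp
next
  case (Suc l) then show ?case using aview_down by (metis le_Suc_eq)
qed

context
  fixes G :: pgraph
  assumes vg: "valid_graph G"
begin

lemma nb_lt: "v < pn G \<Longrightarrow> p < pdeg G v \<Longrightarrow> pnb G v p < pn G"
  using vg unfolding valid_graph_def by blast

lemma nb_ne: "v < pn G \<Longrightarrow> p < pdeg G v \<Longrightarrow> pnb G v p \<noteq> v"
  using vg unfolding valid_graph_def by blast

lemma rport_prop: assumes "v < pn G" "p < pdeg G v"
  shows "rport G v p < pdeg G (pnb G v p) \<and> pnb G (pnb G v p) (rport G v p) = v"
proof -
  let ?w = "pnb G v p"
  have w: "?w < pn G" using nb_lt assms .
  obtain q where q: "q < pdeg G ?w" "pnb G ?w q = v" using vg assms unfolding valid_graph_def by blast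
  have inj: "inj_on (pnb G ?w) {..<pdeg G ?w}" using vg w unfolding valid_graph_def by blast
  have "\<exists>!q. q < pdeg G ?w \<and> pnb G ?w q = v"
  proof (rule ex1I[of _ q])
    show "q < pdeg G ?w \<and> pnb G ?w q = v" using q by simp
    fix q' assume "q' < pdeg G ?w \<and> pnb G ?w q' = v"
    then show "q' = q" using inj q inj_onD[OF inj, of q' q] by simp
  qed
  then show ?thesis unfolding rport_def by (rule theI')
qed

lemma deg_le: assumes "v < pn G" shows "pdeg G v \<le> pn G"
proof -
  have inj: "inj_on (pnb G v) {..<pdeg G v}" using vg assms unfolding valid_graph_def by blast
  have "pnb G v ` {..<pdeg G v} \<subseteq> {..<pn G}" using nb_lt assms by auto
  from card_inj_on_le[OF inj this] show ?thesis by simp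
qed

lemma deg_pos: assumes "v < pn G" shows "0 < pdeg G v"
proof -
  have n3: "3 \<le> pn G" using vg valid_graph_def by simp
  obtain u where u: "u < pn G" "u \<noteq> v" using n3 by (metis Suc_leD le_eq_less_or_eq less_trans_Suc n_not_Suc_n numeral_3_eq_3 zero_less_Suc)
  have "(v, u) \<in> (edge_rel G)\<^sup>*" using vg assms u unfolding valid_graph_def by blast
  then obtain y where "(v, y) \<in> edge_rel G" using u(2) by (metis converse_rtranclE)
  then show ?thesis unfolding edge_rel_def by auto
qed

lemma cm_props: assumes "v < pn G"
  shows "cm G l v < pn G \<and> aview G l (cm G l v) = aview G l v \<and>
         (\<forall>u<pn G. aview G l u = aview G l v \<longrightarrow> cm G l v \<le> u)"
proof -
  let ?S = "{u\<in>{..<pn G}. aview G l u = aview G l v}"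
  have "finite ?S" by simp
  moreover have "v \<in> ?S" using assms by simp
  ultimately have "Min ?S \<in> ?S" "\<forall>u\<in>?S. Min ?S \<le> u" using Min_in Min_le by blast+
  then show ?thesis unfolding cm_def by simp
qed

lemma cm_eq: assumes "u < pn G" "v < pn G"
  shows "cm G l u = cm G l v \<longleftrightarrow> aview G l u = aview G l v"
proof
  assume "cm G l u = cm G l v"
  then show "aview G l u = aview G l v" using cm_props[OF assms(1)] cm_props[OF assms(2)] by metis
next
  assume h: "aview G l u = aview G l v"
  show "cm G l u = cm G l v" unfolding cm_def using h by simp
qed

lemma cm_I1: assumes "v < pn G"
  shows "cm G l v = Min {u\<in>{..<pn G}. cm G l u = cm G l v}"
proof -
  have "{u\<in>{..<pn G}. cm G l u = cm G l v} = {u\<in>{..<pn G}. aview G l u = aview G l v}"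
    using cm_eq assms by auto
  then show ?thesis unfolding cm_def[of G l v] by simp
qed

lemma sigl_eq: assumes "u < pn G" "v < pn G"
  shows "sigl G l u = sigl G l v \<longleftrightarrow> aview G (Suc l) u = aview G (Suc l) v"
proof -
  have "sigl G l u = sigl G l v \<longleftrightarrow> pdeg G u = pdeg G v \<and>
    (\<forall>p<pdeg G u. rport G u p = rport G v p \<and> cm G l (pnb G u p) = cm G l (pnb G v p))"
    unfolding sigl_def map_upt_eq by simp
  also have "\<dots> \<longleftrightarrow> pdeg G u = pdeg G v \<and>
    (\<forall>p<pdeg G u. rport G u p = rport G v p \<and> aview G l (pnb G u p) = aview G l (pnb G v p))"
  proof -
    have "pdeg G u = pdeg G v \<Longrightarrow> p < pdeg G u \<Longrightarrow>
       cm G l (pnb G u p) = cm G l (pnb G v p) \<longleftrightarrow> aview G l (pnb G u p) = aview G l (pnb G v p)" for p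
      using cm_eq nb_lt assms by simp
    then show ?thesis by blast
  qed
  also have "\<dots> \<longleftrightarrow> aview G (Suc l) u = aview G (Suc l) v" using aview_Suc_eq by simp
  finally show ?thesis .
qed

lemma cm_Suc: assumes "v < pn G"
  shows "Min {u\<in>{..<pn G}. sigl G l u = sigl G l v} = cm G (Suc l) v"
proof -
  have "{u\<in>{..<pn G}. sigl G l u = sigl G l v} = {u\<in>{..<pn G}. aview G (Suc l) u = aview G (Suc l) v}"
    using sigl_eq assms by auto
  then show ?thesis unfolding cm_def by simp
qed

lemma sigl_refines: assumes "u < pn G" "v < pn G" "sigl G l u = sigl G l v"
  shows "cm G l u = cm G l v"
  using assms sigl_eq cm_eq aview_down by metis

lemma cm_0: assumes "v < pn G"
  shows "Min {u\<in>{..<pn G}. sig0 G u = sig0 G v} = cm G 0 v"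
  unfolding cm_def sig0_def by simp

lemma sigl_bound: assumes "v < pn G"
  shows "length (sigl G l v) \<le> pn G + 1 \<and> (\<forall>x\<in>set (sigl G l v). fst x < pn G + 1 \<and> snd x < pn G + 1)"
proof -
  have "length (sigl G l v) \<le> pn G + 1" using deg_le[OF assms] by (simp add: sigl_def)
  moreover have "fst x < pn G + 1 \<and> snd x < pn G + 1" if "x \<in> set (sigl G l v)" for x
  proof -
    have "x \<in> (\<lambda>p. (rport G v p, cm G l (pnb G v p))) ` {0..<pdeg G v}"
      using that by (simp add: sigl_def)
    then obtain p where p: "p < pdeg G v" "x = (rport G v p, cm G l (pnb G v p))"
      by auto
    have w: "pnb G v p < pn G" using nb_lt[OF assms p(1)] .
    have "rport G v p < pdeg G (pnb G v p)" using rport_prop[OF assms p(1)] by simp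
    moreover have "pdeg G (pnb G v p) \<le> pn G" using deg_le[OF w] .
    moreover have "cm G l (pnb G v p) < pn G" using cm_props[OF w] by simp
    ultimately show ?thesis using p(2) by simp
  qed
  ultimately show ?thesis by blast
qed

lemma sig0_bound: assumes "v < pn G"
  shows "length (sig0 G v) \<le> pn G + 1 \<and> (\<forall>x\<in>set (sig0 G v). fst x < pn G + 1 \<and> snd x < pn G + 1)"
  using deg_le[OF assms] by (simp add: sig0_def)

end


fun tdeg :: "vtree \<Rightarrow> nat" where
  "tdeg (VLeaf d) = d"
| "tdeg (VNode ch) = length ch"

fun trunc :: "nat \<Rightarrow> vtree \<Rightarrow> vtree" where
  "trunc 0 T = VLeaf (tdeg T)"
| "trunc (Suc l) (VLeaf d) = VLeaf d"
| "trunc (Suc l) (VNode ch) = VNode (map (\<lambda>(p,q,t). (p, q, trunc l t)) ch)"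

fun tdepth :: "vtree \<Rightarrow> nat" where
  "tdepth (VLeaf d) = 0"
| "tdepth (VNode []) = 0"
| "tdepth (VNode ((p,q,t)#rest)) = Suc (tdepth t)"

lemma tdeg_aview: "tdeg (aview G k v) = pdeg G v"
  by (cases k) auto

lemma trunc_aview: "l \<le> k \<Longrightarrow> trunc l (aview G k v) = aview G l v"
proof (induction l arbitrary: k v)
  case 0
  then show ?case by (simp add: tdeg_aview)
next
  case (Suc l)
  then obtain k' where k: "k = Suc k'" "l \<le> k'" by (cases k) auto
  show ?case using Suc.IH[OF k(2)] k(1) by simp
qed

lemma tdepth_aview:
  assumes vg: "valid_graph G"
  shows "v < pn G \<Longrightarrow> tdepth (aview G r v) = r"
proof (induction r arbitrary: v)
  case 0 then show ?case by simp
next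
  case (Suc r)
  have d: "0 < pdeg G v" using deg_pos[OF vg Suc.prems] .
  then have "[0..<pdeg G v] = 0 # [1..<pdeg G v]" by (simp add: upt_conv_Cons)
  then show ?case using Suc.IH[OF nb_lt[OF vg Suc.prems d]] by simp
qed

definition gdist :: "pgraph \<Rightarrow> nat \<Rightarrow> nat" where
  "gdist G u = (LEAST k. (u, 0) \<in> edge_rel G ^^ k)"

definition bp :: "pgraph \<Rightarrow> nat \<Rightarrow> nat" where
  "bp G u = (SOME p. p < pdeg G u \<and> gdist G (pnb G u p) + 1 = gdist G u)"

definition tblG :: "pgraph \<Rightarrow> nat list list" where
  "tblG G = map (\<lambda>u. if u = 0 then [0,0,0] else [bp G u, rport G u (bp G u), pnb G u (bp G u)]) [0..<pn G]"

context
  fixes G :: pgraph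
  assumes vg: "valid_graph G"
begin

lemma n_pos: "0 < pn G" using vg valid_graph_def by simp

lemma dist_ex: assumes "u < pn G" shows "(u, 0) \<in> edge_rel G ^^ gdist G u"
proof -
  have "(u, 0) \<in> (edge_rel G)\<^sup>*" using vg assms n_pos unfolding valid_graph_def by blast
  then obtain k where "(u, 0) \<in> edge_rel G ^^ k" using rtrancl_power by blast
  then show ?thesis unfolding gdist_def by (rule LeastI)
qed

lemma dist_0: assumes "u < pn G" shows "gdist G u = 0 \<longleftrightarrow> u = 0"
proof
  assume "gdist G u = 0" then show "u = 0" using dist_ex[OF assms] by simp
next
  assume "u = 0" then show "gdist G u = 0" unfolding gdist_def by (intro Least_equality) auto
qed

lemma dist_step: assumes "u < pn G" "u \<noteq> 0"
  shows "\<exists>p<pdeg G u. gdist G (pnb G u p) + 1 = gdist G u"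
proof -
  obtain k where k: "gdist G u = Suc k" using dist_0[OF assms(1)] assms(2) by (cases "gdist G u") auto
  then obtain y where y: "(u, y) \<in> edge_rel G" "(y, 0) \<in> edge_rel G ^^ k"
    using dist_ex[OF assms(1)] relpow_Suc_D2 by metis
  then obtain p where p: "p < pdeg G u" "y = pnb G u p" unfolding edge_rel_def by auto
  have "gdist G y \<le> k" using y(2) unfolding gdist_def by (rule Least_le)
  moreover have "gdist G u \<le> Suc (gdist G y)"
  proof -
    have "y < pn G" using nb_lt[OF vg assms(1) p(1)] p(2) by simp
    then have "(u, 0) \<in> edge_rel G ^^ Suc (gdist G y)" using relpow_Suc_I2[OF y(1) dist_ex] by simp
    then show ?thesis unfolding gdist_def by (rule Least_le)
  qed
  ultimately show ?thesis using k p by auto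
qed


lemma bp_prop: assumes "u < pn G" "u \<noteq> 0"
  shows "bp G u < pdeg G u \<and> gdist G (pnb G u (bp G u)) + 1 = gdist G u"
  unfolding bp_def using dist_step[OF assms] by (rule someI_ex)


end

lemma follow_ne: "follow G v ps = Some xs \<Longrightarrow> xs \<noteq> []"
  by (induction G v ps arbitrary: xs rule: follow.induct) (auto split: if_splits)

fun walkf :: "nat list list \<Rightarrow> nat \<Rightarrow> nat \<Rightarrow> nat list" where
  "walkf tbl 0 u = []"
| "walkf tbl (Suc k) u = tbl!u!0 # tbl!u!1 # walkf tbl k (tbl!u!2)"

definition walk :: "nat list list \<Rightarrow> nat \<Rightarrow> nat list" where
  "walk tbl u = walkf tbl (LEAST k. ((\<lambda>x. tbl!x!2)^^k) u = 0) u"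

context
  fixes G :: pgraph
  assumes vg: "valid_graph G"
begin

lemma tbl_len: "length (tblG G) = pn G" by (simp add: tblG_def)

lemma tbl_at: assumes "u < pn G"
  shows "tblG G ! u = (if u = 0 then [0,0,0] else [bp G u, rport G u (bp G u), pnb G u (bp G u)])"
  using assms by (simp add: tblG_def)

lemma iter_prop: assumes "u < pn G"
  shows "((\<lambda>x. tblG G!x!2)^^k) u < pn G \<and> gdist G (((\<lambda>x. tblG G!x!2)^^k) u) = gdist G u - k"
proof (induction k)
  case 0 then show ?case using assms by simp
next
  case (Suc k)
  let ?x = "((\<lambda>x. tblG G!x!2)^^k) u"
  have x: "?x < pn G" "gdist G ?x = gdist G u - k" using Suc by auto
  show ?case
  proof (cases "?x = 0")
    case True
    have d0: "gdist G 0 = 0" using dist_0[OF vg n_pos[OF vg]] by simp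
    then have dk: "gdist G u - k = 0" using x True by simp
    have "tblG G ! 0 ! 2 = 0" using tbl_at[OF n_pos[OF vg]] by simp
    then have "((\<lambda>x. tblG G!x!2)^^Suc k) u = 0" using True by simp
    then show ?thesis using d0 dk n_pos[OF vg] by simp
  next
    case False
    have b: "bp G ?x < pdeg G ?x" "gdist G (pnb G ?x (bp G ?x)) + 1 = gdist G ?x"
      using bp_prop[OF vg x(1) False] by auto
    have "tblG G ! ?x ! 2 = pnb G ?x (bp G ?x)" using tbl_at[OF x(1)] False by simp
    then show ?thesis using b x nb_lt[OF vg x(1) b(1)] by simp
  qed
qed

lemma least_dist: assumes "u < pn G"
  shows "(LEAST k. ((\<lambda>x. tblG G!x!2)^^k) u = 0) = gdist G u"
proof (rule Least_equality)
  let ?y = "((\<lambda>x. tblG G!x!2)^^gdist G u) u"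
  have "?y < pn G" "gdist G ?y = 0" using iter_prop[OF assms, of "gdist G u"] by simp_all
  then show "?y = 0" using dist_0[OF vg] by simp
  fix k assume k: "((\<lambda>x. tblG G!x!2)^^k) u = 0"
  have d0: "gdist G 0 = 0" using dist_0[OF vg n_pos[OF vg]] by simp
  have "gdist G u - k = 0" using iter_prop[OF assms, of k] k d0 by simp
  then show "gdist G u \<le> k" by simp
qed

lemma follow_walkf: "u < pn G \<Longrightarrow> gdist G u = d \<Longrightarrow>
   \<exists>xs. follow G u (walkf (tblG G) d u) = Some xs \<and> distinct xs \<and> last xs = 0 \<and>
        (\<forall>x\<in>set xs. x < pn G \<and> gdist G x \<le> d)"
proof (induction d arbitrary: u)
  case 0
  then have "u = 0" using dist_0[OF vg] by simp
  then show ?case using 0 by simp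
next
  case (Suc d)
  have u0: "u \<noteq> 0"
  proof
    assume "u = 0"
    then have "gdist G u = 0" using dist_0[OF vg Suc.prems(1)] by simp
    then show False using Suc.prems(2) by simp
  qed
  have b: "bp G u < pdeg G u" "gdist G (pnb G u (bp G u)) + 1 = gdist G u"
    using bp_prop[OF vg Suc.prems(1) u0] by auto
  let ?w = "pnb G u (bp G u)"
  have w: "?w < pn G" "gdist G ?w = d" using nb_lt[OF vg Suc.prems(1) b(1)] b(2) Suc.prems by auto
  obtain xs where xs: "follow G ?w (walkf (tblG G) d ?w) = Some xs" "distinct xs" "last xs = 0"
    "\<forall>x\<in>set xs. x < pn G \<and> gdist G x \<le> d" using Suc.IH[OF w] by blast
  have t: "tblG G ! u = [bp G u, rport G u (bp G u), ?w]" using tbl_at[OF Suc.prems(1)] u0 by simp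
  have f: "follow G u (walkf (tblG G) (Suc d) u) = Some (u # xs)"
    using t b(1) xs(1) by simp
  have "u \<notin> set xs" using xs(4) Suc.prems(2) by auto
  moreover have "xs \<noteq> []" using xs(1) follow_ne by blast
  ultimately show ?case using f xs Suc.prems by auto
qed

lemma follow_walk: assumes "u < pn G"
  shows "\<exists>xs. follow G u (walk (tblG G) u) = Some xs \<and> distinct xs \<and> last xs = 0"
  using follow_walkf[OF assms refl] least_dist[OF assms] unfolding walk_def by auto

lemma tbl_bound: "\<forall>t\<in>set (tblG G). length t = 3 \<and> (\<forall>x\<in>set t. x < pn G + 1)"
proof
  fix t assume "t \<in> set (tblG G)"
  then obtain u where u: "u < pn G" "t = tblG G ! u" by (metis in_set_conv_nth tbl_len)
  show "length t = 3 \<and> (\<forall>x\<in>set t. x < pn G + 1)"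
  proof (cases "u = 0")
    case True then show ?thesis using u tbl_at[OF u(1)] by simp
  next
    case False
    have b: "bp G u < pdeg G u" using bp_prop[OF vg u(1) False] by simp
    have "bp G u < pn G + 1" using b deg_le[OF vg u(1)] by simp
    moreover have "rport G u (bp G u) < pn G + 1"
      using rport_prop[OF vg u(1) b] deg_le[OF vg nb_lt[OF vg u(1) b]] by simp
    moreover have "pnb G u (bp G u) < pn G + 1" using nb_lt[OF vg u(1) b] by simp
    ultimately show ?thesis using u tbl_at[OF u(1)] False by simp
  qed
qed

end


definition stabP :: "pgraph \<Rightarrow> nat \<Rightarrow> bool" where
  "stabP G l \<longleftrightarrow> (\<forall>u<pn G. \<forall>v<pn G. aview G l u = aview G l v \<longrightarrow> aview G (Suc l) u = aview G (Suc l) v)"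

context
  fixes G :: pgraph
  assumes vg: "valid_graph G" and fe: "feasible G"
begin

lemma phi_inj: "inj_on (aview G (election_index G)) {..<pn G}"
proof -
  have "\<exists>l. inj_on (aview G l) {..<pn G}" using fe unfolding feasible_def .
  then have "inj_on (aview G (LEAST l. inj_on (aview G l) {..<pn G})) {..<pn G}"
    by (rule LeastI_ex[where P = "\<lambda>l. inj_on (aview G l) {..<pn G}"])
  then show ?thesis unfolding election_index_def .
qed

lemma phi_least: "l < election_index G \<Longrightarrow> \<not> inj_on (aview G l) {..<pn G}"
  unfolding election_index_def by (rule not_less_Least[where P = "\<lambda>l. inj_on (aview G l) {..<pn G}"])

lemma stab_Suc: assumes "stabP G l" shows "stabP G (Suc l)"
  unfolding stabP_def
proof (intro allI impI)
  fix u v assume uv: "u < pn G" "v < pn G" and h: "aview G (Suc l) u = aview G (Suc l) v"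
  have d: "pdeg G u = pdeg G v" and r: "\<forall>p<pdeg G u. rport G u p = rport G v p \<and> aview G l (pnb G u p) = aview G l (pnb G v p)"
    using h unfolding aview_Suc_eq by blast+
  have "\<forall>p<pdeg G u. rport G u p = rport G v p \<and> aview G (Suc l) (pnb G u p) = aview G (Suc l) (pnb G v p)"
  proof (intro allI impI)
    fix p assume p: "p < pdeg G u"
    have a: "pnb G u p < pn G" "pnb G v p < pn G" using nb_lt[OF vg uv(1) p] nb_lt[OF vg uv(2)] p d by auto
    show "rport G u p = rport G v p \<and> aview G (Suc l) (pnb G u p) = aview G (Suc l) (pnb G v p)"
      using r p assms a unfolding stabP_def by blast
  qed
  then show "aview G (Suc (Suc l)) u = aview G (Suc (Suc l)) v"
    unfolding aview_Suc_eq[of G "Suc l"] using d by blast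
qed

lemma stab_all: assumes "stabP G l" "u < pn G" "v < pn G" "aview G l u = aview G l v"
  shows "l \<le> k \<Longrightarrow> aview G k u = aview G k v"
proof (induction k)
  case 0 then show ?case using assms by simp
next
  case (Suc k)
  show ?case
  proof (cases "l = Suc k")
    case True then show ?thesis using assms by simp
  next
    case False
    then have lk: "l \<le> k" using Suc.prems by simp
    have "stabP G k"
    proof -
      have "\<forall>j. stabP G (l + j)"
      proof
        fix j show "stabP G (l + j)"
        proof (induction j)
          case 0 then show ?case using assms(1) by simp
        next
          case (Suc j) then show ?case using stab_Suc[of "l + j"] by simp
        qed
      qed
      then have "stabP G (l + (k - l))" by blast
      then show ?thesis using lk by simp
    qed
    then show ?thesis using Suc.IH[OF lk] assms(2,3) unfolding stabP_def by blast
  qed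
qed

lemma not_stab: assumes "l < election_index G" shows "\<not> stabP G l"
proof
  assume s: "stabP G l"
  have "inj_on (aview G l) {..<pn G}"
  proof (rule inj_onI)
    fix u v assume uv: "u \<in> {..<pn G}" "v \<in> {..<pn G}" and e: "aview G l u = aview G l v"
    have u': "u < pn G" and v': "v < pn G" using uv by simp_all
    have le: "l \<le> election_index G" using assms by simp
    have "aview G (election_index G) u = aview G (election_index G) v"
      by (rule stab_all[OF s u' v' e le])
    then show "u = v" using inj_onD[OF phi_inj] \<open>u \<in> {..<pn G}\<close> \<open>v \<in> {..<pn G}\<close> by blast
  qed
  then show False using phi_least[OF assms] by simp
qed

lemma card_step: assumes "l < election_index G"
  shows "card (aview G l ` {..<pn G}) < card (aview G (Suc l) ` {..<pn G})"
proof -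
  let ?A = "aview G (Suc l) ` {..<pn G}"
  have eq: "aview G l ` {..<pn G} = trunc l ` ?A"
    by (simp only: image_image trunc_aview[OF le_SucI[OF order_refl]])
  obtain u v where uv: "u < pn G" "v < pn G" "aview G l u = aview G l v" "aview G (Suc l) u \<noteq> aview G (Suc l) v"
    using not_stab[OF assms] unfolding stabP_def by blast
  have ninj: "\<not> inj_on (trunc l) ?A"
  proof
    assume i: "inj_on (trunc l) ?A"
    have "trunc l (aview G (Suc l) u) = trunc l (aview G (Suc l) v)" using uv(3) by (simp only: trunc_aview[OF le_SucI[OF order_refl]])
    moreover have "aview G (Suc l) u \<in> ?A" "aview G (Suc l) v \<in> ?A"
      using uv(1,2) by (intro imageI; simp)+
    ultimately have "aview G (Suc l) u = aview G (Suc l) v" using inj_onD[OF i] by blast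
    then show False using uv(4) by blast
  qed
  have fin: "finite ?A" by simp
  have "card (trunc l ` ?A) \<le> card ?A" by (rule card_image_le[OF fin])
  moreover have "card (trunc l ` ?A) \<noteq> card ?A"
  proof
    assume "card (trunc l ` ?A) = card ?A"
    then have "inj_on (trunc l) ?A" using inj_on_iff_eq_card[OF fin, of "trunc l"] by (simp only:)
    then show False using ninj by (simp only:)
  qed
  ultimately have "card (trunc l ` ?A) < card ?A" by simp
  then show ?thesis by (simp only: eq)
qed

lemma card_ge: "l \<le> election_index G \<Longrightarrow> l + 1 \<le> card (aview G l ` {..<pn G})"
proof (induction l)
  case 0
  have "pn G > 0" using n_pos[OF vg] .
  then have "aview G 0 ` {..<pn G} \<noteq> {}" by auto
  then show ?case by (simp add: card_gt_0_iff Suc_le_eq)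
next
  case (Suc l)
  have lt: "l < election_index G" using Suc.prems by simp
  have a: "l + 1 \<le> card (aview G l ` {..<pn G})" using Suc.IH lt by simp
  have b: "card (aview G l ` {..<pn G}) < card (aview G (Suc l) ` {..<pn G})" by (rule card_step[OF lt])
  show ?case using a b by linarith
qed

lemma phi_lt: "election_index G < pn G"
proof -
  have "election_index G + 1 \<le> card (aview G (election_index G) ` {..<pn G})" using card_ge by simp
  also have "\<dots> = pn G" using card_image[OF phi_inj] by simp
  finally show ?thesis by simp
qed

lemma cm_phi: assumes "v < pn G" shows "cm G (election_index G) v = v"
proof -
  let ?c = "cm G (election_index G) v"
  have c: "?c < pn G \<and> aview G (election_index G) ?c = aview G (election_index G) v"
    using cm_props[OF vg assms] by blast
  have m: "?c \<in> {..<pn G}" "v \<in> {..<pn G}" using c assms by simp_all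
  show ?thesis using inj_onD[OF phi_inj _ m] c by blast
qed

end


fun bits :: "nat \<Rightarrow> nat \<Rightarrow> bool list" where
  "bits 0 x = []"
| "bits (Suc w) x = odd x # bits w (x div 2)"

lemma bits_len[simp]: "length (bits w x) = w"
  by (induction w arbitrary: x) auto

lemma bits_inj: "x < 2^w \<Longrightarrow> y < 2^w \<Longrightarrow> bits w x = bits w y \<Longrightarrow> x = y"
proof (induction w arbitrary: x y)
  case 0 then show ?case by simp
next
  case (Suc w)
  have o: "odd x = odd y" and d: "bits w (x div 2) = bits w (y div 2)" using Suc.prems(3) by simp_all
  have "x div 2 < 2^w" "y div 2 < 2^w" using Suc.prems(1,2) by auto
  then have "x div 2 = y div 2" using Suc.IH d by blast
  note dv = this
  have m: "x mod 2 = y mod 2" using o by (simp add: mod2_eq_if)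
  have "x = 2 * (x div 2) + x mod 2" "y = 2 * (y div 2) + y mod 2" by simp_all
  then show ?case using m dv by linarith
qed

lemma concat_fixed_inj:
  "0 < k \<Longrightarrow> \<forall>x\<in>set xs. length x = k \<Longrightarrow> \<forall>y\<in>set ys. length y = k \<Longrightarrow> concat xs = concat ys \<Longrightarrow> xs = ys"
proof (induction xs arbitrary: ys)
  case Nil
  then show ?case by (cases ys) auto
next
  case (Cons x xs)
  show ?case
  proof (cases ys)
    case Nil then show ?thesis using Cons.prems by auto
  next
    case (Cons y ys')
    have "x @ concat xs = y @ concat ys'" using Cons.prems(4) \<open>ys = y # ys'\<close> by simp
    moreover have "length x = length y" using Cons.prems(2,3) \<open>ys = y # ys'\<close> by simp
    ultimately have "x = y" "concat xs = concat ys'" using append_eq_append_conv by blast+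
    then show ?thesis using Cons.IH[of ys'] Cons.prems \<open>ys = y # ys'\<close> by simp
  qed
qed

lemma rep_inj: "replicate w True @ False # X = replicate w' True @ False # X' \<Longrightarrow> w = w' \<and> X = X'"
proof (induction w arbitrary: w')
  case 0 then show ?case by (cases w') auto
next
  case (Suc w) then show ?case by (cases w') auto
qed

definition flat :: "nat \<Rightarrow> nat list list \<Rightarrow> nat list list \<Rightarrow> nat list" where
  "flat phi es tbl = phi # length es # concat es @ concat tbl"

definition enct :: "nat \<times> nat \<times> nat list list \<times> nat list list \<Rightarrow> bool list" where
  "enct d = (case d of (w, phi, es, tbl) \<Rightarrow> replicate w True @ False # concat (map (bits w) (flat phi es tbl)))"

definition goodt :: "nat \<times> nat \<times> nat list list \<times> nat list list \<Rightarrow> bool" where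
  "goodt d = (case d of (w, phi, es, tbl) \<Rightarrow> 0 < w \<and> (\<forall>e\<in>set es. length e = 7) \<and> (\<forall>t\<in>set tbl. length t = 3) \<and>
      (\<forall>x\<in>set (flat phi es tbl). x < 2^w))"

lemma length_concat_fixed: "\<forall>x\<in>set xs. length x = k \<Longrightarrow> length (concat xs) = k * length xs"
  by (induction xs) auto

lemma flat_inj: assumes "\<forall>e\<in>set es. length e = 7" "\<forall>t\<in>set tbl. length t = 3"
  "\<forall>e\<in>set es'. length e = 7" "\<forall>t\<in>set tbl'. length t = 3"
  "flat phi es tbl = flat phi' es' tbl'"
  shows "phi = phi' \<and> es = es' \<and> tbl = tbl'"
proof -
  have a: "phi = phi'" "length es = length es'" "concat es @ concat tbl = concat es' @ concat tbl'"
    using assms(5) unfolding flat_def by simp_all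
  have "length (concat es) = length (concat es')"
    using length_concat_fixed[OF assms(1)] length_concat_fixed[OF assms(3)] a(2) by simp
  then have "concat es = concat es'" "concat tbl = concat tbl'" using a(3) append_eq_append_conv by blast+
  then have "es = es'" "tbl = tbl'" using concat_fixed_inj[of 7 es es'] concat_fixed_inj[of 3 tbl tbl'] assms by simp_all
  then show ?thesis using a by simp
qed

lemma enct_inj: assumes "goodt d" "goodt d'" "enct d = enct d'" shows "d = d'"
proof -
  obtain w phi es tbl where d: "d = (w, phi, es, tbl)" by (cases d) auto
  obtain w' phi' es' tbl' where d': "d' = (w', phi', es', tbl')" by (cases d') auto
  have g: "0 < w" "\<forall>e\<in>set es. length e = 7" "\<forall>t\<in>set tbl. length t = 3" "\<forall>x\<in>set (flat phi es tbl). x < 2^w"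
    using assms(1) d unfolding goodt_def by simp_all
  have g': "0 < w'" "\<forall>e\<in>set es'. length e = 7" "\<forall>t\<in>set tbl'. length t = 3" "\<forall>x\<in>set (flat phi' es' tbl'). x < 2^w'"
    using assms(2) d' unfolding goodt_def by simp_all
  have r: "replicate w True @ False # concat (map (bits w) (flat phi es tbl)) =
      replicate w' True @ False # concat (map (bits w') (flat phi' es' tbl'))"
    using assms(3) d d' unfolding enct_def by simp
  have "w = w'" and c: "concat (map (bits w) (flat phi es tbl)) = concat (map (bits w') (flat phi' es' tbl'))"
    using rep_inj[OF r] by blast+
  then have c2: "concat (map (bits w) (flat phi es tbl)) = concat (map (bits w) (flat phi' es' tbl'))" by simp
  have "map (bits w) (flat phi es tbl) = map (bits w) (flat phi' es' tbl')"
    by (rule concat_fixed_inj[OF g(1) _ _ c2]) auto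
  moreover have "inj_on (bits w) (set (flat phi es tbl) \<union> set (flat phi' es' tbl'))"
  proof (rule inj_onI)
    fix x y assume x: "x \<in> set (flat phi es tbl) \<union> set (flat phi' es' tbl')"
      and y: "y \<in> set (flat phi es tbl) \<union> set (flat phi' es' tbl')" and b: "bits w x = bits w y"
    have "x < 2^w" using x g(4) g'(4) \<open>w = w'\<close> by blast
    moreover have "y < 2^w" using y g(4) g'(4) \<open>w = w'\<close> by blast
    ultimately show "x = y" using bits_inj b by blast
  qed
  ultimately have "flat phi es tbl = flat phi' es' tbl'" using inj_on_map_eq_map by blast
  then have "phi = phi' \<and> es = es' \<and> tbl = tbl'" using flat_inj g g' by blast
  then show ?thesis using d d' \<open>w = w'\<close> by simp
qed

lemma enct_len: "length (enct (w, phi, es, tbl)) = w + 1 + w * length (flat phi es tbl)"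
proof -
  have "length (concat (map (bits w) xs)) = w * length xs" for xs by (induction xs) auto
  then show ?thesis unfolding enct_def by simp
qed



definition runL :: "nat list list \<Rightarrow> nat \<Rightarrow> nat \<Rightarrow> (nat \<times> nat) list \<Rightarrow> nat" where
  "runL es lv c sg = run6 (map tl (filter (\<lambda>e. hd e = lv) es)) c sg"

fun cidT :: "nat list list \<Rightarrow> nat \<Rightarrow> vtree \<Rightarrow> nat" where
  "cidT es 0 T = runL es 0 0 [(tdeg T, 0)]"
| "cidT es (Suc l) T = runL es (Suc l) (cidT es l (trunc l T))
     (case T of VLeaf d \<Rightarrow> [] | VNode ch \<Rightarrow> map (\<lambda>(p,q,t). (q, cidT es l t)) ch)"

definition Aalg :: algorithm where
  "Aalg adv T = (case (SOME d. goodt d \<and> enct d = adv) of (w, phi, es, tbl) \<Rightarrow>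
     if tdepth T = phi then Some (walk tbl (cidT es phi T)) else None)"

lemma filter_levels: "map tl (filter (\<lambda>e. hd e = lv) (concat (map (\<lambda>l. map (Cons l) (f l)) [0..<N])))
   = (if lv < N then f lv else [])"
proof (induction N)
  case 0 then show ?case by simp
next
  case (Suc N)
  have g: "map tl (filter (\<lambda>e. hd e = lv) (map (Cons N) X)) = (if lv = N then X else [])" for X
    by (induction X) auto
  have s: "map tl (filter (\<lambda>e. hd e = lv) (concat (map (\<lambda>l. map (Cons l) (f l)) [0..<Suc N])))
     = map tl (filter (\<lambda>e. hd e = lv) (concat (map (\<lambda>l. map (Cons l) (f l)) [0..<N])))
       @ map tl (filter (\<lambda>e. hd e = lv) (map (Cons N) (f N)))" by simp
  show ?case
  proof (cases "lv < N")
    case True then show ?thesis using s Suc.IH g[of "f N"] by simp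
  next
    case False then show ?thesis using s Suc.IH g[of "f N"] by (cases "lv = N") simp_all
  qed
qed


definition curL :: "pgraph \<Rightarrow> nat \<Rightarrow> nat \<Rightarrow> nat" where
  "curL G l = (case l of 0 \<Rightarrow> (\<lambda>_. 0) | Suc k \<Rightarrow> cm G k)"

definition sL :: "pgraph \<Rightarrow> nat \<Rightarrow> nat \<Rightarrow> (nat \<times> nat) list" where
  "sL G l = (case l of 0 \<Rightarrow> sig0 G | Suc k \<Rightarrow> sigl G k)"

definition PE :: "pgraph \<Rightarrow> nat \<Rightarrow> nat list list \<Rightarrow> bool" where
  "PE G l es \<longleftrightarrow> (\<forall>e\<in>set es. length e = 6 \<and> (\<forall>x\<in>set e. x < pn G + 1)) \<and>
        (\<forall>v\<in>{..<pn G}. run6 es (curL G l v) (sL G l v) = Min {u\<in>{..<pn G}. sL G l u = sL G l v}) \<and>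
        distinct (map (\<lambda>e. e!5) es) \<and> set (map (\<lambda>e. e!5) es) \<inter> curL G l ` {..<pn G} = {} \<and>
        set (map (\<lambda>e. e!5) es) \<subseteq> (\<lambda>v. Min {u\<in>{..<pn G}. sL G l u = sL G l v}) ` {..<pn G}"

definition E :: "pgraph \<Rightarrow> nat \<Rightarrow> nat list list" where
  "E G l = (SOME es. PE G l es)"

definition esG :: "pgraph \<Rightarrow> nat list list" where
  "esG G = concat (map (\<lambda>l. map (Cons l) (E G l)) [0..<election_index G + 1])"

definition wG :: "pgraph \<Rightarrow> nat" where
  "wG G = (LEAST w. pn G + 1 < 2^w)"

definition AdvG :: "pgraph \<Rightarrow> bool list" where
  "AdvG G = enct (wG G, election_index G, esG G, tblG G)"

context
  fixes G :: pgraph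
  assumes vg: "valid_graph G"
begin

lemma n3: "3 \<le> pn G" using vg valid_graph_def by simp

lemma Min_Minpt: assumes "v < pn G" shows "Min {u\<in>{..<pn G}. sL G l u = sL G l v} = cm G l v"
proof (cases l)
  case 0 then show ?thesis using cm_0[OF vg assms] by (simp add: sL_def)
next
  case (Suc k) then show ?thesis using cm_Suc[OF vg assms] by (simp add: sL_def)
qed

lemma E_prop: "PE G l (E G l)"
proof -
  let ?V = "{..<pn G}"
  have fin: "finite ?V" by simp
  have VB: "?V \<subseteq> {..<pn G + 1}" by auto
  have B2: "2 \<le> pn G + 1" using n3 by simp
  have sB: "\<forall>v\<in>?V. length (sL G l v) \<le> pn G + 1 \<and> (\<forall>x\<in>set (sL G l v). fst x < pn G + 1 \<and> snd x < pn G + 1)"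
  proof
    fix v assume "v \<in> ?V"
    then have v: "v < pn G" by simp
    show "length (sL G l v) \<le> pn G + 1 \<and> (\<forall>x\<in>set (sL G l v). fst x < pn G + 1 \<and> snd x < pn G + 1)"
      using sig0_bound[OF vg v] sigl_bound[OF vg v] by (cases l) (simp_all add: sL_def)
  qed
  have I1: "\<forall>v\<in>?V. curL G l v = Min {u\<in>?V. curL G l u = curL G l v}"
  proof
    fix v assume "v \<in> ?V"
    then have v: "v < pn G" by simp
    show "curL G l v = Min {u\<in>?V. curL G l u = curL G l v}"
    proof (cases l)
      case 0
      have "Min {u\<in>?V. curL G l u = curL G l v} = 0" using 0 n3 by (intro Min_eqI) (auto simp: curL_def)
      then show ?thesis using 0 by (simp add: curL_def)
    next
      case (Suc k)
      have c: "curL G l = cm G k" unfolding curL_def Suc by simp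
      show ?thesis unfolding c by (rule cm_I1[OF vg v])
    qed
  qed
  have I2: "\<forall>u\<in>?V. \<forall>v\<in>?V. sL G l u = sL G l v \<longrightarrow> curL G l u = curL G l v"
  proof (intro ballI impI)
    fix u v assume uv: "u \<in> ?V" "v \<in> ?V" and e: "sL G l u = sL G l v"
    show "curL G l u = curL G l v"
    proof (cases l)
      case 0 then show ?thesis by (simp add: curL_def)
    next
      case (Suc k)
      have c: "curL G l = cm G k" "sL G l = sigl G k" unfolding curL_def sL_def Suc by simp_all
      have u: "u < pn G" and v: "v < pn G" using uv by simp_all
      show ?thesis unfolding c(1) by (rule sigl_refines[OF vg u v]) (use e c(2) in simp)
    qed
  qed
  have "\<exists>es. PE G l es"
    unfolding PE_def by (rule split_main[OF fin VB B2 sB refl I1 I2])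
  then show ?thesis unfolding E_def by (rule someI_ex)
qed

lemma cm_mono: "cm G k ` {..<pn G} \<subseteq> cm G (Suc k) ` {..<pn G}"
proof
  fix m assume "m \<in> cm G k ` {..<pn G}"
  then obtain v where v: "v < pn G" "m = cm G k v" by auto
  have m: "m < pn G" "aview G k m = aview G k v" "\<forall>u<pn G. aview G k u = aview G k v \<longrightarrow> m \<le> u"
    using cm_props[OF vg v(1), of k] v(2) by auto
  let ?c = "cm G (Suc k) m"
  have c: "?c < pn G" "aview G (Suc k) ?c = aview G (Suc k) m" "\<forall>u<pn G. aview G (Suc k) u = aview G (Suc k) m \<longrightarrow> ?c \<le> u"
    using cm_props[OF vg m(1), of "Suc k"] by auto
  have "?c \<le> m" using c(3) m(1) by blast
  moreover have "aview G k ?c = aview G k m" using aview_down[OF c(2)] .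
  then have "m \<le> ?c" using m c(1) by auto
  ultimately have "?c = m" by simp
  then show "m \<in> cm G (Suc k) ` {..<pn G}" using m(1) by (metis imageI lessThan_iff)
qed

lemma ids_distinct: "distinct (concat (map (\<lambda>l. map (\<lambda>e. e!5) (E G l)) [0..<N])) \<and>
   (\<forall>k. N = Suc k \<longrightarrow> set (concat (map (\<lambda>l. map (\<lambda>e. e!5) (E G l)) [0..<N])) \<subseteq> cm G k ` {..<pn G})"
proof (induction N)
  case 0 then show ?case by simp
next
  case (Suc N)
  let ?prev = "concat (map (\<lambda>l. map (\<lambda>e. e!5) (E G l)) [0..<N])"
  let ?X = "map (\<lambda>e. e!5) (E G N)"
  have IHd: "distinct ?prev" and IHs: "\<And>k. N = Suc k \<Longrightarrow> set ?prev \<subseteq> cm G k ` {..<pn G}"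
    using Suc.IH by blast+
  have eq: "concat (map (\<lambda>l. map (\<lambda>e. e!5) (E G l)) [0..<Suc N]) = ?prev @ ?X" by simp
  note P = E_prop[of N, unfolded PE_def]
  have pe1: "distinct ?X" using P by (elim conjE) assumption
  have pe2: "set ?X \<inter> curL G N ` {..<pn G} = {}" using P by (elim conjE) assumption
  have pe3: "set ?X \<subseteq> (\<lambda>v. Min {u\<in>{..<pn G}. sL G N u = sL G N v}) ` {..<pn G}"
    using P by (elim conjE) assumption
  note pe = pe1 pe2 pe3
  have X: "set ?X \<subseteq> cm G N ` {..<pn G}"
  proof
    fix x assume "x \<in> set ?X"
    then have "x \<in> (\<lambda>v. Min {u\<in>{..<pn G}. sL G N u = sL G N v}) ` {..<pn G}" using pe(3) by (rule subsetD[rotated])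
    then obtain v where v: "v \<in> {..<pn G}" and x: "x = Min {u\<in>{..<pn G}. sL G N u = sL G N v}" by (rule imageE)
    have "x = cm G N v" using x Min_Minpt[of v N] v by simp
    then show "x \<in> cm G N ` {..<pn G}" using v by (rule rev_image_eqI[rotated])
  qed
  have disj: "set ?prev \<inter> set ?X = {}" and prev: "set ?prev \<subseteq> cm G N ` {..<pn G}"
  proof -
    have "set ?prev \<inter> set ?X = {} \<and> set ?prev \<subseteq> cm G N ` {..<pn G}"
    proof (cases "N = 0")
      case True then show ?thesis by simp
    next
      case False
      then obtain k where k: "N = Suc k" by (cases N) auto
      have i: "set ?prev \<subseteq> cm G k ` {..<pn G}" using IHs[OF k] .
      have cu: "curL G N = cm G k" unfolding k curL_def by simp
      have p2: "set ?X \<inter> cm G k ` {..<pn G} = {}" using pe(2) unfolding cu .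
      have "set ?prev \<inter> set ?X = {}" using i p2 by blast
      moreover have "cm G k ` {..<pn G} \<subseteq> cm G N ` {..<pn G}" using cm_mono[of k] unfolding k .
      then have "set ?prev \<subseteq> cm G N ` {..<pn G}" using i by (rule subset_trans[rotated])
      ultimately show ?thesis by (rule conjI)
    qed
    then show "set ?prev \<inter> set ?X = {}" "set ?prev \<subseteq> cm G N ` {..<pn G}" by blast+
  qed
  have d: "distinct (?prev @ ?X)" using IHd pe(1) disj by simp
  have st: "set (?prev @ ?X) \<subseteq> cm G N ` {..<pn G}" using prev X by simp
  show ?case unfolding eq using d st by blast
qed

context
  assumes fe: "feasible G"
begin

lemma runL_esG: assumes "lv \<le> election_index G" shows "runL (esG G) lv c sg = run6 (E G lv) c sg"
  unfolding runL_def esG_def filter_levels using assms by simp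

lemma cid_correct: "l \<le> election_index G \<Longrightarrow> v < pn G \<Longrightarrow> cidT (esG G) l (aview G l v) = cm G l v"
proof (induction l arbitrary: v)
  case 0
  have "cidT (esG G) 0 (aview G 0 v) = run6 (E G 0) 0 [(pdeg G v, 0)]"
    using runL_esG[of 0] by simp
  also have "\<dots> = run6 (E G 0) (curL G 0 v) (sL G 0 v)" by (simp add: curL_def sL_def sig0_def)
  also have "\<dots> = Min {u\<in>{..<pn G}. sL G 0 u = sL G 0 v}" using E_prop[of 0] 0 unfolding PE_def by simp
  also have "\<dots> = cm G 0 v" using Min_Minpt[OF "0.prems"(2)] .
  finally show ?case .
next
  case (Suc l)
  let ?es = "esG G"
  let ?T = "aview G (Suc l) v"
  have lphi: "l \<le> election_index G" using Suc.prems by simp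
  have h1: "trunc l ?T = aview G l v" by (rule trunc_aview) simp
  have IH: "\<forall>u<pn G. cidT ?es l (aview G l u) = cm G l u" using Suc.IH[OF lphi] by blast
  have T: "?T = VNode (map (\<lambda>p. (p, rport G v p, aview G l (pnb G v p))) [0..<pdeg G v])" by simp
  have h2: "(case ?T of VLeaf d \<Rightarrow> [] | VNode ch \<Rightarrow> map (\<lambda>(p,q,t). (q, cidT ?es l t)) ch) = sigl G l v"
  proof -
    have "(case ?T of VLeaf d \<Rightarrow> [] | VNode ch \<Rightarrow> map (\<lambda>(p,q,t). (q, cidT ?es l t)) ch)
       = map (\<lambda>p. (rport G v p, cidT ?es l (aview G l (pnb G v p)))) [0..<pdeg G v]"
      by (simp only: T vtree.case) (simp add: comp_def)
    also have "\<dots> = map (\<lambda>p. (rport G v p, cm G l (pnb G v p))) [0..<pdeg G v]"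
    proof (rule map_cong[OF refl])
      fix p assume "p \<in> set [0..<pdeg G v]"
      then have "pnb G v p < pn G" using nb_lt[OF vg Suc.prems(2)] by simp
      then show "(rport G v p, cidT ?es l (aview G l (pnb G v p))) = (rport G v p, cm G l (pnb G v p))"
        using IH by simp
    qed
    finally show ?thesis unfolding sigl_def .
  qed
  have "cidT ?es (Suc l) ?T = runL ?es (Suc l) (cidT ?es l (trunc l ?T))
     (case ?T of VLeaf d \<Rightarrow> [] | VNode ch \<Rightarrow> map (\<lambda>(p,q,t). (q, cidT ?es l t)) ch)"
    by (simp only: cidT.simps)
  also have "\<dots> = run6 (E G (Suc l)) (cm G l v) (sigl G l v)"
    unfolding h1 h2 IH[rule_format, OF Suc.prems(2)] using runL_esG[OF Suc.prems(1)] by simp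
  also have "\<dots> = run6 (E G (Suc l)) (curL G (Suc l) v) (sL G (Suc l) v)" by (simp add: curL_def sL_def)
  also have "\<dots> = Min {u\<in>{..<pn G}. sL G (Suc l) u = sL G (Suc l) v}"
    using E_prop[of "Suc l"] Suc.prems(2) unfolding PE_def by simp
  also have "\<dots> = cm G (Suc l) v" using Min_Minpt[OF Suc.prems(2)] .
  finally show ?case .
qed

end
end


context
  fixes G :: pgraph
  assumes vg: "valid_graph G" and fe: "feasible G"
begin

lemma E_fields: "\<forall>e\<in>set (E G l). length e = 6 \<and> (\<forall>x\<in>set e. x < pn G + 1)"
  using E_prop[OF vg, of l] unfolding PE_def by (elim conjE) assumption

lemma esG_bound: "\<forall>e\<in>set (esG G). length e = 7 \<and> (\<forall>x\<in>set e. x < pn G + 1)"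
proof
  fix e assume "e \<in> set (esG G)"
  then obtain l e' where l: "l < election_index G + 1" "e' \<in> set (E G l)" "e = l # e'"
    unfolding esG_def by auto
  have "l < pn G + 1" using l(1) phi_lt[OF vg fe] by simp
  then show "length e = 7 \<and> (\<forall>x\<in>set e. x < pn G + 1)" using E_fields[of l] l by auto
qed

lemma len_esG: "length (esG G) \<le> pn G + 1"
proof -
  let ?I = "concat (map (\<lambda>l. map (\<lambda>e. e!5) (E G l)) [0..<election_index G + 1])"
  have m: "map (\<lambda>e. e!6) (esG G) = ?I" unfolding esG_def by (simp add: map_concat comp_def)
  have d: "distinct ?I" using ids_distinct[OF vg] by blast
  have s: "set ?I \<subseteq> {..<pn G + 1}"
  proof
    fix x assume "x \<in> set ?I"
    then obtain l e where e: "e \<in> set (E G l)" "x = e!5" by auto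
    then have "length e = 6" "\<forall>y\<in>set e. y < pn G + 1" using E_fields[of l] by auto
    then show "x \<in> {..<pn G + 1}" using e(2) by (simp add: nth_mem)
  qed
  have "length ?I = card (set ?I)" using distinct_card[OF d] by simp
  also have "\<dots> \<le> card {..<pn G + 1}" by (rule card_mono[OF _ s]) simp
  finally have "length ?I \<le> pn G + 1" by simp
  moreover have "length (esG G) = length ?I" using arg_cong[OF m, of length] by simp
  ultimately show ?thesis by simp
qed

lemma wG_props: "pn G + 1 < 2 ^ wG G \<and> 0 < wG G \<and> 2 ^ (wG G - 1) \<le> pn G + 1"
proof -
  have ex: "\<exists>w. pn G + 1 < 2 ^ w" using less_exp by blast
  have a: "pn G + 1 < 2 ^ wG G" unfolding wG_def using LeastI_ex[OF ex] .
  have b: "0 < wG G"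
  proof (rule ccontr)
    assume "\<not> 0 < wG G" then have "wG G = 0" by simp
    then show False using a by simp
  qed
  have c: "\<not> pn G + 1 < 2 ^ (wG G - 1)"
  proof
    assume "pn G + 1 < 2 ^ (wG G - 1)"
    then have "wG G \<le> wG G - 1" unfolding wG_def by (rule Least_le)
    then show False using b by simp
  qed
  show ?thesis using a b c by simp
qed

lemma good: "goodt (wG G, election_index G, esG G, tblG G)"
proof -
  have w: "pn G + 1 < 2 ^ wG G" using wG_props by simp
  have "\<forall>x\<in>set (flat (election_index G) (esG G) (tblG G)). x < pn G + 2"
  proof
    fix x assume "x \<in> set (flat (election_index G) (esG G) (tblG G))"
    then have "x = election_index G \<or> x = length (esG G) \<or> x \<in> set (concat (esG G)) \<or> x \<in> set (concat (tblG G))"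
      unfolding flat_def by auto
    then show "x < pn G + 2"
    proof (elim disjE)
      assume "x = election_index G" then show ?thesis using phi_lt[OF vg fe] by simp
    next
      assume "x = length (esG G)" then show ?thesis using len_esG by simp
    next
      assume "x \<in> set (concat (esG G))" then show ?thesis using esG_bound by fastforce
    next
      assume "x \<in> set (concat (tblG G))" then show ?thesis using tbl_bound[OF vg] by fastforce
    qed
  qed
  then have "\<forall>x\<in>set (flat (election_index G) (esG G) (tblG G)). x < 2 ^ wG G" using w by fastforce
  then show ?thesis unfolding goodt_def using wG_props esG_bound tbl_bound[OF vg] by simp
qed

lemma decode: "(SOME d. goodt d \<and> enct d = AdvG G) = (wG G, election_index G, esG G, tblG G)"
proof (rule some_equality)
  show "goodt (wG G, election_index G, esG G, tblG G) \<and> enct (wG G, election_index G, esG G, tblG G) = AdvG G"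
    using good unfolding AdvG_def by simp
  fix d assume "goodt d \<and> enct d = AdvG G"
  then show "d = (wG G, election_index G, esG G, tblG G)"
    using enct_inj[OF _ good] unfolding AdvG_def by blast
qed

lemma A_eval: "Aalg (AdvG G) T = (if tdepth T = election_index G
    then Some (walk (tblG G) (cidT (esG G) (election_index G) T)) else None)"
  unfolding Aalg_def decode by simp

lemma elects: "elects_in_time Aalg (AdvG G) G (election_index G)"
proof -
  let ?phi = "election_index G"
  have H: "\<exists>r\<le>?phi. Aalg (AdvG G) (aview G r v) \<noteq> None \<and> (\<forall>r'<r. Aalg (AdvG G) (aview G r' v) = None) \<and>
        (\<exists>xs. follow G v (the (Aalg (AdvG G) (aview G r v))) = Some xs \<and> distinct xs \<and> last xs = 0)"
    if v: "v < pn G" for v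
  proof -
    have c: "cidT (esG G) ?phi (aview G ?phi v) = v"
      using cid_correct[OF vg fe order_refl v] cm_phi[OF vg fe v] by simp
    have a: "Aalg (AdvG G) (aview G ?phi v) = Some (walk (tblG G) v)"
      using A_eval tdepth_aview[OF vg v] c by simp
    have b: "\<forall>r'<?phi. Aalg (AdvG G) (aview G r' v) = None"
      using A_eval tdepth_aview[OF vg v] by simp
    obtain xs where xs: "follow G v (walk (tblG G) v) = Some xs" "distinct xs" "last xs = 0"
      using follow_walk[OF vg v] by blast
    show ?thesis using a b xs by (intro exI[of _ ?phi]) auto
  qed
  have "0 < pn G" using n_pos[OF vg] .
  then show ?thesis unfolding elects_in_time_def using H by (intro exI[of _ 0]) blast
qed

lemma len_nat: "length (AdvG G) \<le> wG G * (10 * pn G + 10) + 1"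
proof -
  have lf: "length (flat (election_index G) (esG G) (tblG G)) = 2 + 7 * length (esG G) + 3 * pn G"
    unfolding flat_def using length_concat_fixed[of "esG G" 7] length_concat_fixed[of "tblG G" 3]
      esG_bound tbl_bound[OF vg] tbl_len[OF vg] by simp
  have "length (AdvG G) = wG G + 1 + wG G * (2 + 7 * length (esG G) + 3 * pn G)"
    unfolding AdvG_def enct_len lf ..
  also have "\<dots> \<le> wG G + 1 + wG G * (2 + 7 * (pn G + 1) + 3 * pn G)"
  proof -
    have "wG G * (2 + 7 * length (esG G) + 3 * pn G) \<le> wG G * (2 + 7 * (pn G + 1) + 3 * pn G)"
      using len_esG by (intro mult_le_mono2) simp
    then show ?thesis by simp
  qed
  also have "\<dots> = wG G * (10 * pn G + 10) + 1" by (simp add: algebra_simps)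
  finally show ?thesis .
qed

lemma len_real: "real (length (AdvG G)) \<le> 50 * real (pn G) * log 2 (real (pn G))"
proof -
  let ?x = "real (pn G)" and ?w = "real (wG G)" and ?L = "log 2 (real (pn G))"
  have n3: "3 \<le> pn G" using vg valid_graph_def by simp
  have x3: "3 \<le> ?x" using n3 by simp
  have p: "2 ^ (wG G - 1) \<le> 2 * pn G" using wG_props n3 by simp
  have "real (wG G - 1) \<le> log 2 (real (2 * pn G))" using le_log2_of_power[OF p] .
  moreover have "log 2 (real (2 * pn G)) = 1 + ?L" using n3 by (simp add: log_mult)
  moreover have "real (wG G - 1) = ?w - 1" using wG_props by (simp add: of_nat_diff)
  ultimately have wL: "?w \<le> ?L + 2" by simp
  have L1: "1 \<le> ?L"
  proof -
    have "2 ^ 1 \<le> pn G" using n3 by simp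
    then show ?thesis using le_log2_of_power[of 1 "pn G"] by simp
  qed
  have len: "real (length (AdvG G)) \<le> ?w * (10 * ?x + 10) + 1"
  proof -
    have "real (length (AdvG G)) \<le> real (wG G * (10 * pn G + 10) + 1)" using len_nat by (rule of_nat_mono)
    then show ?thesis by simp
  qed
  have m1: "?w * (10 * ?x + 10) \<le> (?L + 2) * (10 * ?x + 10)"
    using wL x3 by (intro mult_right_mono) auto
  have e: "(?L + 2) * (10 * ?x + 10) = 10 * (?x * ?L) + 10 * ?L + 20 * ?x + 20" by (simp add: algebra_simps)
  have f1: "?x \<le> ?x * ?L" using L1 x3 by (metis mult.right_neutral mult_left_mono of_nat_0_le_iff)
  have f2: "3 * ?L \<le> ?x * ?L" using L1 x3 by (intro mult_right_mono) auto
  have "50 * ?x * ?L = 50 * (?x * ?L)" by simp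
  then show ?thesis using len m1 e f1 f2 x3 by linarith
qed

end

theorem theorem1:
  shows "\<exists>(C::real) > 0. \<exists>(A::algorithm). \<exists>Adv :: pgraph \<Rightarrow> bool list.
     \<forall>G. valid_graph G \<and> feasible G \<longrightarrow>
        real (length (Adv G)) \<le> C * real (pn G) * log 2 (real (pn G)) \<and>
        elects_in_time A (Adv G) G (election_index G)"
proof (intro exI[of _ 50] conjI exI[of _ Aalg] exI[of _ AdvG] allI impI)
  show "(0::real) < 50" by simp
  fix G assume h: "valid_graph G \<and> feasible G"
  show "real (length (AdvG G)) \<le> 50 * real (pn G) * log 2 (real (pn G))" using len_real h by blast
  show "elects_in_time Aalg (AdvG G) G (election_index G)" using elects h by blast
qed


end
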